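(* For every $n\geq 2$, $\deg(\mathrm{nib}:\{0,1\}^n\to\{0,1\}^n)=3/2$.
   Context: For finite sets $X,Y$ and $f:X\to Y$, $\deg(f)=\frac{1}{|X|}\sum_{y\in Y}|f^{-1}(y)|^2$. For a binary word $w\in\{0,1\}^n$, $\mathrm{nib}(w)$ is obtained from $w$ by replacing the first (leftmost) occurrence of the factor $10$ in $w$ with $01$; if $w$ contains no factor $10$, then $\mathrm{nib}(w)=w$. *)

theory Defs
  imports Complex_Main
begin

definition deg :: "'a set \<Rightarrow> 'b set \<Rightarrow> ('a \<Rightarrow> 'b) \<Rightarrow> real" where
  "deg X Y f = (\<Sum>y\<in>Y. (real (card {x\<in>X. f x = y}))^2) / real (card X)"

text \<open>Binary words as lists of booleans (False = 0, True = 1), leftmost letter first.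
  nib replaces the first (leftmost) factor 10 by 01.\<close>
fun nib :: "bool list \<Rightarrow> bool list" where
  "nib (True # False # w) = False # True # w"
| "nib (a # w) = a # nib w"
| "nib [] = []"

definition words :: "nat \<Rightarrow> bool list set" where
  "words n = {w. length w = n}"

end

theory Submission
  imports Defs
begin

lemma length_nib[simp]: "length (nib x) = length x"
  by (induction x rule: nib.induct) auto

fun hh :: "bool list \<Rightarrow> nat" where
  "hh (True # w) = 1"
| "hh _ = 0"

fun aa :: "bool list \<Rightarrow> nat" and bb :: "bool list \<Rightarrow> nat" where
  "aa [] = 1"
| "aa (False # y) = aa y + hh y"
| "aa (True # y) = bb y"
| "bb [] = 1"
| "bb (True # y) = bb y"
| "bb (False # y) = hh y"

lemma nib_Nil_iff: "nib x = [] \<longleftrightarrow> x = []"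
  by (metis length_0_conv length_nib)

lemma nib_False_iff: "nib x = False # y \<longleftrightarrow>
   (\<exists>x'. x = False # x' \<and> nib x' = y) \<or> (\<exists>w. x = True # False # w \<and> y = True # w)"
  apply (cases x rule: nib.cases)
  apply auto
  done

lemma nib_True_iff: "nib x = True # y \<longleftrightarrow>
   (\<exists>x'. x = True # x' \<and> nib x' = y \<and> (x' = [] \<or> hd x'))"
  apply (cases x rule: nib.cases)
  apply auto
  done

lemma hd_nib: "x \<noteq> [] \<Longrightarrow> hd (nib x) = True \<Longrightarrow> hd x = True"
  by (cases x rule: nib.cases) auto

lemma card_fibers:
  "card {x. nib x = y} = aa y \<and> card {x. nib x = y \<and> (x = [] \<or> hd x)} = bb y"
proof (induction y)
  case Nil
  have "{x. nib x = []} = {[]}" by (auto simp: nib_Nil_iff)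
  moreover have "{x. nib x = [] \<and> (x = [] \<or> hd x)} = {[]}" by (auto simp: nib_Nil_iff)
  ultimately show ?case by simp
next
  case (Cons c y)
  have A: "{x. nib x = True # y} = (#) True ` {x. nib x = y \<and> (x = [] \<or> hd x)}"
    by (auto simp: nib_True_iff)
  have cA: "card {x. nib x = True # y} = bb y"
    unfolding A using Cons.IH by (simp add: card_image)
  show ?case
  proof (cases c)
    case True
    have B: "{x. nib x = True # y \<and> (x = [] \<or> hd x)} = {x. nib x = True # y}"
      using hd_nib by (auto simp: nib_True_iff)
    show ?thesis using True B cA by simp
  next
    case False
    have B: "{x. nib x = False # y \<and> (x = [] \<or> hd x)} =
       (case y of True # w \<Rightarrow> {True # False # w} | _ \<Rightarrow> {})"
      by (cases y rule: hh.cases) (auto simp: nib_False_iff)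
    have cB: "card {x. nib x = False # y \<and> (x = [] \<or> hd x)} = hh y"
      unfolding B by (cases y rule: hh.cases) auto
    have fin: "finite {x. nib x = y}"
    proof (rule finite_subset)
      show "{x. nib x = y} \<subseteq> {x. set x \<subseteq> UNIV \<and> length x = length y}" by auto
      show "finite {x::bool list. set x \<subseteq> UNIV \<and> length x = length y}"
        by (rule finite_lists_length_eq) simp
    qed
    have C: "{x. nib x = False # y} = (#) False ` {x. nib x = y} \<union>
       (case y of True # w \<Rightarrow> {True # False # w} | _ \<Rightarrow> {})"
      by (cases y rule: hh.cases) (auto simp: nib_False_iff)
    have "card {x. nib x = False # y} = aa y + hh y"
      unfolding C using Cons.IH fin
      by (cases y rule: hh.cases) (auto simp: card_image card_insert_if)
    then show ?thesis using False cB by simp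
  qed
qed

lemma words_Suc: "words (Suc n) = (#) True ` words n \<union> (#) False ` words n"
  unfolding words_def by (auto simp: length_Suc_conv image_iff)

lemma finite_words: "finite (words n)"
  unfolding words_def using finite_lists_length_eq[of "UNIV::bool set" n] by simp

lemma sum_words_Suc: "(\<Sum>y\<in>words (Suc n). f y) =
   (\<Sum>w\<in>words n. f (True # w)) + (\<Sum>w\<in>words n. f (False # w))"
proof -
  have "(\<Sum>y\<in>words (Suc n). f y) = sum f ((#) True ` words n) + sum f ((#) False ` words n)"
    unfolding words_Suc by (rule sum.union_disjoint) (auto simp: finite_words)
  also have "\<dots> = (\<Sum>w\<in>words n. f (True # w)) + (\<Sum>w\<in>words n. f (False # w))"
    by (simp add: sum.reindex)
  finally show ?thesis .
qed

lemma card_words: "card (words n) = 2 ^ n"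
proof (induction n)
  case 0
  have "words 0 = {[]}" unfolding words_def by auto
  then show ?case by simp
next
  case (Suc n)
  have "card (words (Suc n)) = (\<Sum>y\<in>words (Suc n). 1)" by simp
  also have "\<dots> = 2 ^ Suc n" unfolding sum_words_Suc using Suc by simp
  finally show ?case .
qed

lemma hh_le1: "hh y \<le> Suc 0"
  by (cases y rule: hh.cases) auto

lemma bb_le1: "bb y \<le> 1"
  by (induction y rule: aa_bb.induct(2)) (auto simp: hh_le1)

lemma sum_hh: "(\<Sum>y\<in>words (Suc m). hh y) = 2 ^ m"
  unfolding sum_words_Suc by (simp add: card_words)

lemma sum_bb: "(\<Sum>y\<in>words (Suc m). bb y) = 2 ^ m"
proof (induction m)
  case 0
  have "words 0 = {[]}" unfolding words_def by auto
  then show ?case unfolding sum_words_Suc by simp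
next
  case (Suc m)
  show ?case
    apply (subst sum_words_Suc)
    using Suc sum_hh[of m] by simp
qed

lemma sum_ah: "(\<Sum>y\<in>words (Suc m). aa y * hh y) = (\<Sum>y\<in>words m. bb y)"
  unfolding sum_words_Suc by simp

lemma hh_sq: "hh y * hh y = hh y"
  by (cases y rule: hh.cases) auto

lemma bb_sq: "bb y ^ 2 = bb y"
  using bb_le1[of y] by (cases "bb y") (auto simp: power2_eq_square)

lemma S_rec: "(\<Sum>y\<in>words (Suc m). aa y ^ 2) =
   (\<Sum>y\<in>words m. bb y) + (\<Sum>y\<in>words m. aa y ^ 2) + 2 * (\<Sum>y\<in>words m. aa y * hh y)
   + (\<Sum>y\<in>words m. hh y)"
proof -
  have "(\<Sum>y\<in>words (Suc m). aa y ^ 2) =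
     (\<Sum>y\<in>words m. bb y ^ 2) + (\<Sum>y\<in>words m. aa y ^ 2 + 2 * (aa y * hh y) + hh y)"
    unfolding sum_words_Suc by (simp add: power2_eq_square algebra_simps hh_sq mult_2_right)
  then show ?thesis by (simp add: bb_sq sum.distrib sum_distrib_left)
qed

lemma S_closed: "(\<Sum>y\<in>words (Suc (Suc k)). aa y ^ 2) = 3 * 2 ^ Suc k"
proof (induction k)
  case 0
  have w0: "words 0 = {[]}" unfolding words_def by auto
  have "(\<Sum>y\<in>words 1. aa y ^ 2) = 2"
    using S_rec[of 0] by (simp add: w0)
  then show ?case using S_rec[of 1] sum_bb[of 0] sum_ah[of 0] sum_hh[of 0] by (simp add: w0)
next
  case (Suc k)
  show ?case
    using S_rec[of "Suc (Suc k)"] Suc sum_bb[of "Suc k"] sum_ah[of "Suc k"] sum_bb[of k]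
      sum_hh[of "Suc k"] by simp
qed

theorem mainTheorem12:
  fixes n :: nat
  assumes "n \<ge> 2"
  shows "deg (words n) (words n) nib = 3 / 2"
proof -
  obtain k where k: "n = Suc (Suc k)" using assms by (metis add_2_eq_Suc le_Suc_ex)
  have fib: "card {x\<in>words n. nib x = y} = aa y" if "y \<in> words n" for y
  proof -
    have "{x\<in>words n. nib x = y} = {x. nib x = y}"
      using that unfolding words_def by auto
    then show ?thesis using card_fibers by simp
  qed
  have "(\<Sum>y\<in>words n. (real (card {x\<in>words n. nib x = y}))^2) = real (\<Sum>y\<in>words n. aa y ^ 2)"
    by (simp add: fib)
  also have "\<dots> = 3 * 2 ^ Suc k" using S_closed k by simp
  finally show ?thesis unfolding deg_def card_words k by simp
qed

end
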